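(* Let $\mathcal A$ be a $C^*$-algebra with identity $1$, let $\delta\colon\mathcal A\to\mathcal A$ be a $^*$-endomorphism, and let $\delta_*$ be a non-degenerate transfer operator for $(\mathcal A,\delta)$. Then: 1) $\delta_*(1)$ is an orthogonal projection lying in the center of $\mathcal A$; 2) $\delta_*(\mathcal A)=\delta_*(1)\mathcal A$; 3) the restriction of $\delta$ to $\delta_*(\mathcal A)$ is a $^*$-isomorphism of $\delta_*(\mathcal A)$ onto $\delta(\mathcal A)$, and the restriction of $\delta_*$ to $\delta(\mathcal A)$ is a $^*$-isomorphism of $\delta(\mathcal A)$ onto $\delta_*(\mathcal A)$, namely the inverse of the former.
   Context: A transfer operator for $(\mathcal A,\delta)$ is a continuous positive linear map $\delta_*\colon\mathcal A\to\mathcal A$ such that $\delta_*(\delta(a)b)=a\,\delta_*(b)$ for all $a,b\in\mathcal A$. A transfer operator $\delta_*$ is called non-degenerate if $\delta(\delta_*(1))=\delta(1)$ (equivalently, $\delta\circ\delta_*\circ\delta=\delta$, or equivalently $\delta\circ\delta_*$ is a conditional expectation onto $\delta(\mathcal A)$). *)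

theory Defs
  imports "HOL-Analysis.Analysis"
begin

locale unital_cstar_algebra =
  fixes cscale :: "complex \<Rightarrow> 'a::{real_normed_algebra_1, banach} \<Rightarrow> 'a"
    and star :: "'a \<Rightarrow> 'a"
  assumes cscale_of_real: "cscale (complex_of_real r) x = scaleR r x"
    and cscale_add_right: "cscale c (x + y) = cscale c x + cscale c y"
    and cscale_add_left: "cscale (c + d) x = cscale c x + cscale d x"
    and cscale_cscale: "cscale c (cscale d x) = cscale (c * d) x"
    and cscale_one: "cscale 1 x = x"
    and cscale_mult_left: "cscale c x * y = cscale c (x * y)"
    and cscale_mult_right: "x * cscale c y = cscale c (x * y)"
    and norm_cscale: "norm (cscale c x) = cmod c * norm x"
    and star_star: "star (star x) = x"
    and star_add: "star (x + y) = star x + star y"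
    and star_cscale: "star (cscale c x) = cscale (cnj c) (star x)"
    and star_mult: "star (x * y) = star y * star x"
    and cstar_identity: "norm (star x * x) = (norm x)^2"

definition cpositive :: "('a::ring \<Rightarrow> 'a) \<Rightarrow> 'a \<Rightarrow> bool" where
  "cpositive star a \<longleftrightarrow> (\<exists>b. a = star b * b)"

definition clinear_map :: "(complex \<Rightarrow> 'a::ring \<Rightarrow> 'a) \<Rightarrow> ('a \<Rightarrow> 'a) \<Rightarrow> bool" where
  "clinear_map cscale f \<longleftrightarrow>
     (\<forall>x y. f (x + y) = f x + f y) \<and> (\<forall>c x. f (cscale c x) = cscale c (f x))"

text \<open>A *-endomorphism (not required to be unital).\<close>
definition star_endomorphism ::
  "(complex \<Rightarrow> 'a::ring \<Rightarrow> 'a) \<Rightarrow> ('a \<Rightarrow> 'a) \<Rightarrow> ('a \<Rightarrow> 'a) \<Rightarrow> bool" where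
  "star_endomorphism cscale star \<delta> \<longleftrightarrow> clinear_map cscale \<delta> \<and>
     (\<forall>x y. \<delta> (x * y) = \<delta> x * \<delta> y) \<and> (\<forall>x. \<delta> (star x) = star (\<delta> x))"

definition transfer_operator ::
  "(complex \<Rightarrow> 'a::real_normed_algebra \<Rightarrow> 'a) \<Rightarrow> ('a \<Rightarrow> 'a) \<Rightarrow> ('a \<Rightarrow> 'a) \<Rightarrow> ('a \<Rightarrow> 'a) \<Rightarrow> bool" where
  "transfer_operator cscale star \<delta> \<delta>s \<longleftrightarrow>
     continuous_on UNIV \<delta>s \<and> clinear_map cscale \<delta>s \<and>
     (\<forall>a. cpositive star a \<longrightarrow> cpositive star (\<delta>s a)) \<and>
     (\<forall>a b. \<delta>s (\<delta> a * b) = a * \<delta>s b)"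

definition nondegenerate_transfer_operator ::
  "(complex \<Rightarrow> 'a::real_normed_algebra_1 \<Rightarrow> 'a) \<Rightarrow> ('a \<Rightarrow> 'a) \<Rightarrow> ('a \<Rightarrow> 'a) \<Rightarrow> ('a \<Rightarrow> 'a) \<Rightarrow> bool" where
  "nondegenerate_transfer_operator cscale star \<delta> \<delta>s \<longleftrightarrow>
     transfer_operator cscale star \<delta> \<delta>s \<and> \<delta> (\<delta>s 1) = \<delta> 1"

definition orth_projection :: "('a::ring \<Rightarrow> 'a) \<Rightarrow> 'a \<Rightarrow> bool" where
  "orth_projection star p \<longleftrightarrow> p * p = p \<and> star p = p"

definition central :: "'a::ring \<Rightarrow> bool" where
  "central p \<longleftrightarrow> (\<forall>a. p * a = a * p)"

definition star_iso_on ::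
  "(complex \<Rightarrow> 'a::ring \<Rightarrow> 'a) \<Rightarrow> ('a \<Rightarrow> 'a) \<Rightarrow> 'a set \<Rightarrow> 'a set \<Rightarrow> ('a \<Rightarrow> 'a) \<Rightarrow> bool" where
  "star_iso_on cscale star S T f \<longleftrightarrow>
     (\<forall>x\<in>S. \<forall>y\<in>S. f (x + y) = f x + f y \<and> f (x * y) = f x * f y) \<and>
     (\<forall>c. \<forall>x\<in>S. f (cscale c x) = cscale c (f x)) \<and>
     (\<forall>x\<in>S. f (star x) = star (f x)) \<and>
     bij_betw f S T"

end

theory Submission
  imports Defs
begin

context unital_cstar_algebra
begin

lemma star_zero: "star 0 = 0"
  using star_add[of 0 0] by simp

lemma star_minus: "star (- x) = - star x"
  using star_add[of x "-x"] star_zero by (metis add.commute add_eq_0_iff)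

lemma star_diff: "star (x - y) = star x - star y"
  using star_add[of x "-y"] star_minus[of y] by simp

lemma star_one: "star 1 = 1"
proof -
  have "star 1 = star 1 * star (star 1)" by (simp add: star_star)
  also have "\<dots> = star (star 1 * 1)" by (simp only: star_mult)
  also have "\<dots> = 1" by (simp add: star_star)
  finally show ?thesis .
qed

lemma cscale_minus_right: "cscale c (- x) = - cscale c x"
  using cscale_add_right[of c x "-x"]
  by (metis add.right_inverse add_right_cancel cscale_add_right add.left_neutral add.right_neutral eq_neg_iff_add_eq_0)

lemma cscale_diff_right: "cscale c (x - y) = cscale c x - cscale c y"
  using cscale_add_right[of c x "-y"] cscale_minus_right[of c y] by simp

lemma double_cancel: "(x::'a) + x = y + y \<Longrightarrow> x = y"
proof -
  assume "x + x = y + y"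
  then have "scaleR 2 x = scaleR 2 y" by (simp add: scaleR_2)
  then show ?thesis by simp
qed

end

lemma four_cancel: "(x::'a::real_normed_algebra_1) + x + x + x = y + y + y + y \<Longrightarrow> x = y"
proof -
  assume "x + x + x + x = y + y + y + y"
  then have "scaleR 4 x = scaleR 4 y"
    by (metis (no_types, lifting) add.assoc numeral_Bit0 scaleR_2 scaleR_left_distrib)
  then show ?thesis by simp
qed

theorem proposition4:
  fixes cscale :: "complex \<Rightarrow> 'a::{real_normed_algebra_1, banach} \<Rightarrow> 'a"
    and star :: "'a \<Rightarrow> 'a"
    and \<delta> \<delta>s :: "'a \<Rightarrow> 'a"
  assumes "unital_cstar_algebra cscale star"
    and "star_endomorphism cscale star \<delta>"
    and "nondegenerate_transfer_operator cscale star \<delta> \<delta>s"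
  shows "(orth_projection star (\<delta>s 1) \<and> central (\<delta>s 1))
    \<and> range \<delta>s = {\<delta>s 1 * a | a. True}
    \<and> star_iso_on cscale star (range \<delta>s) (range \<delta>) \<delta>
    \<and> star_iso_on cscale star (range \<delta>) (range \<delta>s) \<delta>s
    \<and> (\<forall>x\<in>range \<delta>s. \<delta>s (\<delta> x) = x) \<and> (\<forall>y\<in>range \<delta>. \<delta> (\<delta>s y) = y)"
proof -
  interpret C: unital_cstar_algebra cscale star by fact
  have dadd: "\<And>x y. \<delta> (x + y) = \<delta> x + \<delta> y" and dsc: "\<And>c x. \<delta> (cscale c x) = cscale c (\<delta> x)"
    and dmul: "\<And>x y. \<delta> (x * y) = \<delta> x * \<delta> y" and dstar: "\<And>x. \<delta> (star x) = star (\<delta> x)"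
    using assms(2) unfolding star_endomorphism_def clinear_map_def by auto
  have sadd: "\<And>x y. \<delta>s (x + y) = \<delta>s x + \<delta>s y" and ssc: "\<And>c x. \<delta>s (cscale c x) = cscale c (\<delta>s x)"
    and spos: "\<And>a. cpositive star a \<Longrightarrow> cpositive star (\<delta>s a)"
    and stra: "\<And>a b. \<delta>s (\<delta> a * b) = a * \<delta>s b" and nd: "\<delta> (\<delta>s 1) = \<delta> 1"
    using assms(3) unfolding nondegenerate_transfer_operator_def transfer_operator_def clinear_map_def
    by auto
  have s0: "\<delta>s 0 = 0" using sadd[of 0 0] by simp
  have sminus: "\<And>x. \<delta>s (- x) = - \<delta>s x" using sadd s0 by (metis add.right_inverse add_eq_0_iff)
  have sdiff: "\<And>x y. \<delta>s (x - y) = \<delta>s x - \<delta>s y" using sadd sminus by (metis diff_conv_add_uminus)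
  define p where "p = \<delta>s 1"
  have sa_posimg: "\<And>u. star (\<delta>s (star u * u)) = \<delta>s (star u * u)"
  proof -
    fix u
    have "cpositive star (\<delta>s (star u * u))" by (rule spos) (auto simp: cpositive_def)
    then obtain c where c: "\<delta>s (star u * u) = star c * c" by (auto simp: cpositive_def)
    show "star (\<delta>s (star u * u)) = \<delta>s (star u * u)" unfolding c by (simp add: C.star_mult C.star_star)
  qed
  have sa: "\<And>h. star h = h \<Longrightarrow> star (\<delta>s h) = \<delta>s h"
  proof -
    fix h assume h: "star h = h"
    have e1: "star (h + 1) * (h + 1) - star (h - 1) * (h - 1) = h + h + h + h"
      using h by (simp add: C.star_add C.star_diff C.star_one algebra_simps)
    have "star (\<delta>s (h + h + h + h)) = \<delta>s (h + h + h + h)"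
      unfolding e1[symmetric] sdiff
      using C.star_diff[of "\<delta>s (star (h + 1) * (h + 1))" "\<delta>s (star (h - 1) * (h - 1))"]
        sa_posimg[of "h + 1"] sa_posimg[of "h - 1"] by (simp only:)
    then have "star (\<delta>s h) + star (\<delta>s h) + star (\<delta>s h) + star (\<delta>s h) = \<delta>s h + \<delta>s h + \<delta>s h + \<delta>s h"
      by (simp add: sadd C.star_add)
    then show "star (\<delta>s h) = \<delta>s h" by (rule four_cancel)
  qed
  have pstar: "star p = p" unfolding p_def by (rule sa) (simp add: C.star_one)
  have sd: "\<And>a. \<delta>s (\<delta> a) = a * p" unfolding p_def using stra[of _ 1] by simp
  have comm_sa: "\<And>a. star a = a \<Longrightarrow> p * a = a * p"
  proof -
    fix a assume a: "star a = a"
    have "star (a * p) = a * p" unfolding sd[symmetric] by (rule sa) (simp add: dstar[symmetric] a)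
    then show "p * a = a * p" by (simp add: C.star_mult pstar a)
  qed
  have central: "\<And>a. p * a = a * p"
  proof -
    fix a
    have c1: "p * (a + star a) = (a + star a) * p"
      by (rule comm_sa) (simp add: C.star_add C.star_star add.commute)
    have st2: "star (cscale \<i> (a - star a)) = cscale \<i> (a - star a)"
    proof -
      have "star (cscale \<i> (a - star a)) = cscale (- \<i>) (star a - a)"
        by (simp add: C.star_cscale C.star_diff C.star_star)
      also have "\<dots> = cscale (\<i> * (-1)) (star a - a)" by simp
      also have "\<dots> = cscale \<i> (cscale (complex_of_real (-1)) (star a - a))"
        by (simp add: C.cscale_cscale)
      also have "\<dots> = cscale \<i> (a - star a)" by (simp only: C.cscale_of_real) simp
      finally show ?thesis .
    qed
    have "p * cscale \<i> (a - star a) = cscale \<i> (a - star a) * p"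
      by (rule comm_sa[OF st2])
    then have "cscale \<i> (p * (a - star a)) = cscale \<i> ((a - star a) * p)"
      by (simp add: C.cscale_mult_left C.cscale_mult_right)
    then have "cscale (- \<i>) (cscale \<i> (p * (a - star a))) = cscale (- \<i>) (cscale \<i> ((a - star a) * p))"
      by simp
    then have c2: "p * (a - star a) = (a - star a) * p"
      by (simp add: C.cscale_cscale C.cscale_one)
    have "p * a + p * a = p * (a + star a) + p * (a - star a)" by (simp add: algebra_simps)
    also have "\<dots> = (a + star a) * p + (a - star a) * p" using c1 c2 by simp
    also have "\<dots> = a * p + a * p" by (simp add: algebra_simps)
    finally have "p * a + p * a = a * p + a * p" .
    then show "p * a = a * p" by (rule C.double_cancel)
  qed
  have pp: "p * p = p"
  proof -
    have "p * p = \<delta>s (\<delta> p)" by (simp add: sd)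
    also have "\<dots> = \<delta>s (\<delta> 1)" using nd p_def by simp
    also have "\<dots> = p" by (simp add: sd)
    finally show ?thesis .
  qed
  have sp: "\<And>b. p * \<delta>s b = \<delta>s b"
  proof -
    fix b
    have "p * \<delta>s b = \<delta>s (\<delta> p * b)" by (simp add: stra)
    also have "\<dots> = \<delta>s b" using nd p_def stra[of 1 b] by simp
    finally show "p * \<delta>s b = \<delta>s b" .
  qed
  have rng: "range \<delta>s = {p * a | a. True}"
  proof
    show "range \<delta>s \<subseteq> {p * a | a. True}" using sp by (metis (mono_tags, lifting) image_subsetI mem_Collect_eq)
    show "{p * a | a. True} \<subseteq> range \<delta>s"
    proof
      fix x assume "x \<in> {p * a | a. True}"
      then obtain a where "x = p * a" by blast
      then have "x = \<delta>s (\<delta> a)" using sd central by simp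
      then show "x \<in> range \<delta>s" by simp
    qed
  qed
  have inv1: "\<And>x. x \<in> range \<delta>s \<Longrightarrow> \<delta>s (\<delta> x) = x"
    using sd central sp by auto
  have inv2: "\<And>y. y \<in> range \<delta> \<Longrightarrow> \<delta> (\<delta>s y) = y"
  proof -
    fix y assume "y \<in> range \<delta>"
    then obtain a where a: "y = \<delta> a" by auto
    have "\<delta> (\<delta>s y) = \<delta> a * \<delta> p" by (simp add: a sd dmul)
    also have "\<dots> = \<delta> a" using nd p_def dmul[of a 1] by simp
    finally show "\<delta> (\<delta>s y) = y" using a by simp
  qed
  have iso1: "star_iso_on cscale star (range \<delta>s) (range \<delta>) \<delta>"
    unfolding star_iso_on_def
  proof (intro conjI ballI allI)
    show "bij_betw \<delta> (range \<delta>s) (range \<delta>)"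
      by (rule bij_betw_byWitness[where f'="\<delta>s"]) (auto simp: inv1 inv2)
  qed (auto simp: dadd dmul dsc dstar)
  have iso2: "star_iso_on cscale star (range \<delta>) (range \<delta>s) \<delta>s"
    unfolding star_iso_on_def
  proof (intro conjI ballI allI)
    show "bij_betw \<delta>s (range \<delta>) (range \<delta>s)"
      by (rule bij_betw_byWitness[where f'="\<delta>"]) (auto simp: inv1 inv2)
    fix x y assume "x \<in> range \<delta>" "y \<in> range \<delta>"
    then obtain a b where ab: "x = \<delta> a" "y = \<delta> b" by auto
    show "\<delta>s (x + y) = \<delta>s x + \<delta>s y" by (rule sadd)
    have "\<delta>s (x * y) = a * b * p" by (simp add: ab dmul[symmetric] sd)
    also have "\<dots> = a * p * (b * p)" by (metis central mult.assoc pp)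
    finally show "\<delta>s (x * y) = \<delta>s x * \<delta>s y" by (simp add: ab sd)
  next
    fix c x assume "x \<in> range \<delta>" show "\<delta>s (cscale c x) = cscale c (\<delta>s x)" by (rule ssc)
  next
    fix x assume "x \<in> range \<delta>"
    then obtain a where a: "x = \<delta> a" by auto
    show "\<delta>s (star x) = star (\<delta>s x)"
      by (simp add: a dstar[symmetric] sd C.star_mult pstar central)
  qed
  show ?thesis
    using pstar pp central rng iso1 iso2 inv1 inv2
    unfolding orth_projection_def Defs.central_def p_def[symmetric] by blast
qed

end
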